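(* Let $0\le m<M$ and let $n>2$ be an integer. For integers $0\le r\le s<n$ define $$E^{BW,U}_n(r,s)=\sum_{k=r+1}^{s}\frac{M\,r}{(k-1)\,n}+\sum_{k=s+1}^{n}(M+m)\frac{r(s-1)}{(k-1)(k-2)\,n},$$ where any term of the form $0/0$ is interpreted as $0$. Let $(\mathcal{M}_1(n),\mathcal{M}_2(n))$ be a point at which $E^{BW,U}_n$ attains its maximum. Then (i) $\lim_{n\to\infty}\mathcal{M}_1(n)/n=\dfrac{e^{-1+\frac{m}{M}}M}{m+M}$; (ii) $\lim_{n\to\infty}\mathcal{M}_2(n)/n=\dfrac{M}{m+M}$; (iii) $\lim_{n\to\infty}E^{BW,U}_n(\mathcal{M}_1(n),\mathcal{M}_2(n))=\dfrac{e^{-1+\frac{m}{M}}M^2}{m+M}$.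
   Context: $E^{BW,U}_n(r,s)$ is the expected payoff, in the Best-or-Worst secretary problem with $n$ candidates where choosing the overall best pays $M$ and the overall worst pays $m$, of the strategy that rejects the first $r$ candidates, then accepts the first candidate better than all preceding ones up to the $s$-th interview, and afterwards accepts the first candidate better or worse than all preceding ones. *)

theory Defs
  imports Complex_Main
begin

text \<open>Expected payoff E^{BW,U}_n(r,s) with payoffs M (best) and m (worst).
  Division by zero yields 0 in Isabelle, matching the convention 0/0 = 0
  (numerators vanish whenever denominators do).\<close>
definition E_BWU :: "real \<Rightarrow> real \<Rightarrow> nat \<Rightarrow> nat \<Rightarrow> nat \<Rightarrow> real" where
  "E_BWU m M n r s =
     (\<Sum>k\<in>{r+1..s}. M * real r / ((real k - 1) * real n))
   + (\<Sum>k\<in>{s+1..n}. (M + m) * (real r * (real s - 1)) /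
                      ((real k - 1) * (real k - 2) * real n))"

definition is_max_point :: "real \<Rightarrow> real \<Rightarrow> nat \<Rightarrow> nat \<Rightarrow> nat \<Rightarrow> bool" where
  "is_max_point m M n r s \<longleftrightarrow> r \<le> s \<and> s < n \<and>
     (\<forall>r' s'. r' \<le> s' \<and> s' < n \<longrightarrow> E_BWU m M n r' s' \<le> E_BWU m M n r s)"

end

theory Submission
  imports Defs
begin

lemma harm_upper:
  assumes "1 \<le> r" "r \<le> s"
  shows "(\<Sum>k\<in>{r+1..s}. 1 / (real k - 1)) \<le> ln (real s) - ln (real r) + 1 / real r - 1 / real s"
  using assms(2)
proof (induction s rule: dec_induct)
  case base then show ?case by simp
next
  case (step s)
  have s1: "real s \<ge> 1" using assms step by simp
  have "ln (real s / (real s + 1)) \<le> real s / (real s + 1) - 1"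
    by (rule ln_le_minus_one) (use s1 in simp)
  also have "\<dots> = - 1 / (real s + 1)" using s1 by (simp add: field_simps)
  finally have l: "ln (real s) - ln (real s + 1) \<le> - 1 / (real s + 1)"
    using s1 by (simp add: ln_div)
  have "{r+1..Suc s} = insert (Suc s) {r+1..s}" using step by auto
  then have "(\<Sum>k\<in>{r+1..Suc s}. 1 / (real k - 1)) = 1 / real s + (\<Sum>k\<in>{r+1..s}. 1 / (real k - 1))"
    by simp
  then show ?case using step.IH l by (simp add: add_ac)
qed

lemma harm_lower:
  assumes "1 \<le> r" "r \<le> s"
  shows "ln (real s) - ln (real r) \<le> (\<Sum>k\<in>{r+1..s}. 1 / (real k - 1))"
  using assms(2)
proof (induction s rule: dec_induct)
  case base then show ?case by simp
next
  case (step s)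
  have s1: "real s \<ge> 1" using assms step by simp
  have "ln ((real s + 1) / real s) \<le> (real s + 1) / real s - 1"
    by (rule ln_le_minus_one) (use s1 in simp)
  also have "\<dots> = 1 / real s" using s1 by (simp add: field_simps)
  finally have l: "ln (real s + 1) - ln (real s) \<le> 1 / real s"
    using s1 by (simp add: ln_div)
  have "{r+1..Suc s} = insert (Suc s) {r+1..s}" using step by auto
  then have "(\<Sum>k\<in>{r+1..Suc s}. 1 / (real k - 1)) = 1 / real s + (\<Sum>k\<in>{r+1..s}. 1 / (real k - 1))"
    by simp
  then show ?case using step.IH l by (simp add: add_ac)
qed

lemma telesc:
  assumes "2 \<le> s" "s \<le> n"
  shows "(\<Sum>k\<in>{s+1..n}. 1 / ((real k - 1) * (real k - 2))) = 1 / (real s - 1) - 1 / (real n - 1)"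
  using assms(2)
proof (induction n rule: dec_induct)
  case base then show ?case by simp
next
  case (step n)
  have n2: "real n \<ge> 2" using assms step by simp
  have "{s+1..Suc n} = insert (Suc n) {s+1..n}" using step by auto
  then have "(\<Sum>k\<in>{s+1..Suc n}. 1 / ((real k - 1) * (real k - 2))) = 1 / (real n * (real n - 1)) + (\<Sum>k\<in>{s+1..n}. 1 / ((real k - 1) * (real k - 2)))"
    by simp
  moreover have "1 / (real n * (real n - 1)) = 1 / (real n - 1) - 1 / real n" using n2 by (simp add: field_simps)
  ultimately show ?case using step.IH by simp
qed


definition FF :: "real \<Rightarrow> real \<Rightarrow> real \<Rightarrow> real \<Rightarrow> real" where
  "FF m M x y = x * (M * (ln y - ln x) + (M + m) * (1 - y))"

lemma E_zero: "E_BWU m M n 0 s = 0"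
  by (simp add: E_BWU_def)

lemma first_sum:
  assumes "1 \<le> r" "n > 0"
  shows "(\<Sum>k\<in>{r+1..s}. M * real r / ((real k - 1) * real n)) = M * real r / real n * (\<Sum>k\<in>{r+1..s}. 1 / (real k - 1))"
  unfolding sum_distrib_left
proof (rule sum.cong)
  fix k assume "k \<in> {r+1..s}"
  then have "real k - 1 > 0" using assms by auto
  then show "M * real r / ((real k - 1) * real n) = M * real r / real n * (1 / (real k - 1))"
    using assms by (simp add: field_simps)
qed simp

lemma second_sum:
  assumes "2 \<le> s" "s \<le> n"
  shows "(\<Sum>k\<in>{s+1..n}. (M + m) * (real r * (real s - 1)) / ((real k - 1) * (real k - 2) * real n))
     = (M + m) * real r / real n * ((real n - real s) / (real n - 1))"
proof -
  have "(\<Sum>k\<in>{s+1..n}. (M + m) * (real r * (real s - 1)) / ((real k - 1) * (real k - 2) * real n))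
     = (M + m) * (real r * (real s - 1)) / real n * (\<Sum>k\<in>{s+1..n}. 1 / ((real k - 1) * (real k - 2)))"
    unfolding sum_distrib_left
  proof (rule sum.cong)
    fix k assume "k \<in> {s+1..n}"
    then have "real k - 1 > 0" "real k - 2 > 0" using assms by auto
    then show "(M + m) * (real r * (real s - 1)) / ((real k - 1) * (real k - 2) * real n) =
      (M + m) * (real r * (real s - 1)) / real n * (1 / ((real k - 1) * (real k - 2)))"
      by (simp add: field_simps)
  qed simp
  also have "\<dots> = (M + m) * real r / real n * ((real n - real s) / (real n - 1))"
  proof -
    have a: "real s - 1 > 0" "real n - 1 > 0" "real n > 0" using assms by auto
    have e: "(real s - 1) * (1 / (real s - 1) - 1 / (real n - 1)) = (real n - real s) / (real n - 1)"
    proof -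
      have g: "\<And>a b::real. a \<noteq> 0 \<Longrightarrow> b \<noteq> 0 \<Longrightarrow> a * (1 / a - 1 / b) = (b - a) / b"
        by (simp add: right_diff_distrib diff_divide_distrib)
      have "(real n - 1) - (real s - 1) = real n - real s" by simp
      then show ?thesis using g[of "real s - 1" "real n - 1"] a by simp
    qed
    have "(M + m) * (real r * (real s - 1)) / real n * (1 / (real s - 1) - 1 / (real n - 1))
        = (M + m) * real r / real n * ((real s - 1) * (1 / (real s - 1) - 1 / (real n - 1)))"
      by (simp add: mult.assoc mult.commute mult.left_commute)
    then show ?thesis unfolding telesc[OF assms] e .
  qed
  finally show ?thesis .
qed

lemma E_form:
  assumes "1 \<le> r" "r \<le> s" "2 \<le> s" "s \<le> n"
  shows "E_BWU m M n r s = M * real r / real n * (\<Sum>k\<in>{r+1..s}. 1 / (real k - 1))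
     + (M + m) * real r / real n * ((real n - real s) / (real n - 1))"
proof -
  have "n > 0" using assms by simp
  then show ?thesis
    unfolding E_BWU_def first_sum[OF assms(1) \<open>n > 0\<close>] second_sum[OF assms(3,4)] by simp
qed

lemma E_upper:
  assumes "0 \<le> m" "0 < M" "1 \<le> r" "r \<le> s" "s < n"
  shows "E_BWU m M n r s \<le> FF m M (real r / real n) (real s / real n) + (2 * M + m) / real n"
proof (cases "s = 1")
  case True
  then have r1: "r = 1" using assms by simp
  have "E_BWU m M n r s = 0" unfolding E_BWU_def True r1 by simp
  moreover have "FF m M (real r / real n) (real s / real n) \<ge> 0"
    unfolding FF_def True r1 using assms by (auto intro!: mult_nonneg_nonneg)
  moreover have "(2 * M + m) / real n \<ge> 0" using assms by simp
  ultimately show ?thesis by linarith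
next
  case False
  then have s2: "2 \<le> s" using assms by simp
  have n: "real n > 0" "real r > 0" "real s > 0" using assms by auto
  define S where "S = (\<Sum>k\<in>{r+1..s}. 1 / (real k - 1))"
  have S: "S \<le> ln (real s) - ln (real r) + 1 / real r"
  proof -
    have "1 / real s \<ge> 0" by simp
    then show ?thesis using harm_upper[OF assms(3,4)] unfolding S_def by linarith
  qed
  have lnq: "ln (real s / real n) - ln (real r / real n) = ln (real s) - ln (real r)"
    using n by (simp add: ln_div)
  have q: "(real n - real s) / (real n - 1) \<le> (1 - real s / real n) + 1 / real n"
    using assms n by (simp add: field_simps)
  have rn: "real r / real n \<le> 1" "real r / real n \<ge> 0" using assms by auto
  have "E_BWU m M n r s = M * (real r / real n) * S + (M + m) * (real r / real n) * ((real n - real s) / (real n - 1))"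
    unfolding E_form[OF assms(3,4) s2 less_imp_le[OF assms(5)]] S_def by simp
  also have "\<dots> \<le> M * (real r / real n) * (ln (real s) - ln (real r) + 1 / real r)
      + (M + m) * (real r / real n) * ((1 - real s / real n) + 1 / real n)"
    by (intro add_mono mult_left_mono S q) (use assms rn in auto)
  also have "\<dots> = FF m M (real r / real n) (real s / real n) + M / real n + (M + m) * (real r / real n) / real n"
    unfolding FF_def lnq using n by (simp add: field_simps)
  also have "(M + m) * (real r / real n) / real n \<le> (M + m) / real n"
  proof -
    have "(M + m) * (real r / real n) \<le> M + m" using rn assms by (intro mult_left_le) auto
    then show ?thesis using n divide_right_mono[of "(M + m) * (real r / real n)" "M + m" "real n"] by simp
  qed
  finally show ?thesis by (simp add: add_divide_distrib)
qed

lemma E_lower: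
  assumes "0 \<le> m" "0 < M" "1 \<le> r" "r \<le> s" "2 \<le> s" "s < n"
  shows "FF m M (real r / real n) (real s / real n) \<le> E_BWU m M n r s"
proof -
  have n: "real n > 0" "real r > 0" "real s > 0" using assms by auto
  define S where "S = (\<Sum>k\<in>{r+1..s}. 1 / (real k - 1))"
  have S: "ln (real s) - ln (real r) \<le> S"
    using harm_lower[OF assms(3,4)] n unfolding S_def by simp
  have lnq: "ln (real s / real n) - ln (real r / real n) = ln (real s) - ln (real r)"
    using n by (simp add: ln_div)
  have q: "(1 - real s / real n) \<le> (real n - real s) / (real n - 1)"
    using assms n by (simp add: field_simps)
  have rn: "real r / real n \<ge> 0" using assms by auto
  have "FF m M (real r / real n) (real s / real n) = M * (real r / real n) * (ln (real s) - ln (real r))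
      + (M + m) * (real r / real n) * (1 - real s / real n)"
    by (simp only: FF_def lnq) algebra
  also have "\<dots> \<le> M * (real r / real n) * S + (M + m) * (real r / real n) * ((real n - real s) / (real n - 1))"
    by (intro add_mono mult_left_mono S q) (use assms rn in auto)
  also have "\<dots> = E_BWU m M n r s"
    unfolding E_form[OF assms(3,4,5) less_imp_le[OF assms(6)]] S_def by simp
  finally show ?thesis .
qed


lemma ident:
  fixes m M x y :: real
  assumes "0 \<le> m" "0 < M" "0 < x" "0 < y"
  defines "y0 \<equiv> M / (m + M)" and "x0 \<equiv> exp (-1 + m / M) * (M / (m + M))"
  shows "M * x0 - FF m M x y = M * x * (y / y0 - 1 - ln (y / y0)) + M * x0 * (1 - x / x0 + (x / x0) * ln (x / x0))"
proof -
  have y0: "y0 > 0" unfolding y0_def using assms by simp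
  have x0: "x0 > 0" unfolding x0_def using assms by simp
  have xy: "x0 = exp (-1 + m / M) * y0" unfolding x0_def y0_def ..
  have lx0: "ln x0 = -1 + m / M + ln y0" unfolding xy using ln_mult[of "exp (-1 + m / M)" y0] y0 by simp
  have l1: "ln (y / y0) = ln y - ln y0" using y0 assms(4) by (rule ln_divide_pos[rotated])
  have l2: "ln (x / x0) = ln x - ln x0" using x0 assms(3) by (rule ln_divide_pos[rotated])
  have a: "M * x * (y / y0) = (m + M) * x * y" unfolding y0_def using assms by (simp add: field_simps)
  have b: "M * x0 * ((x / x0) * ln (x / x0)) = M * x * (ln x - ln x0)" 
  proof -
    have "M * x0 * ((x / x0) * ln (x / x0)) = M * x * ln (x / x0)" using x0 by simp
    then show ?thesis unfolding l2 .
  qed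
  have c: "M * x * (m / M) = m * x" using assms by simp
  have "M * x * (y / y0 - 1 - ln (y / y0)) + M * x0 * (1 - x / x0 + (x / x0) * ln (x / x0))
      = M * x * (y / y0) - M * x - M * x * (ln y - ln y0) + M * x0 - M * x + M * x0 * ((x / x0) * ln (x / x0))"
    unfolding l1 using x0 by (simp add: algebra_simps)
  also have "\<dots> = (m + M) * x * y - M * x - M * x * (ln y - ln y0) + M * x0 - M * x + M * x * (ln x - (-1 + m / M + ln y0))"
    unfolding a b lx0 ..
  also have "\<dots> = (m + M) * x * y - M * x - M * x * ln y + M * x0 - M * x * (m / M) + M * x * ln x"
    by (simp add: algebra_simps)
  also have "\<dots> = M * x0 - FF m M x y" unfolding c FF_def by (simp add: algebra_simps)
  finally show ?thesis by simp
qed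

lemma hbound:
  fixes t :: real assumes "0 < t"
  shows "(sqrt t - 1)^2 \<le> t - 1 - ln t"
proof -
  have "ln (sqrt t) \<le> sqrt t - 1" using assms by (intro ln_le_minus_one) simp
  then have "ln t \<le> 2 * (sqrt t - 1)" using assms by (simp add: ln_sqrt)
  moreover have "(sqrt t - 1)^2 = t - 2 * sqrt t + 1" using assms by (simp add: power2_eq_square algebra_simps)
  ultimately show ?thesis by simp
qed

lemma kbound:
  fixes u :: real assumes "0 < u"
  shows "(1 - sqrt u)^2 \<le> 1 - u + u * ln u"
proof -
  have "ln (1 / sqrt u) \<le> 1 / sqrt u - 1" using assms by (intro ln_le_minus_one) simp
  then have "- ln u \<le> 2 * (1 / sqrt u - 1)" using assms by (simp add: ln_sqrt ln_div)
  then have "u * (- ln u) \<le> u * (2 * (1 / sqrt u - 1))" using assms by (intro mult_left_mono) auto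
  also have "u * (2 * (1 / sqrt u - 1)) = 2 * sqrt u - 2 * u"
    using assms by (simp add: field_simps)
  finally have *: "- (u * ln u) \<le> 2 * sqrt u - 2 * u" by simp
  have "(1 - sqrt u)^2 = 1 - 2 * sqrt u + u" using assms by (simp add: power2_eq_square algebra_simps)
  then show ?thesis using * by simp
qed

lemma sq_lim:
  fixes u :: "nat \<Rightarrow> real"
  assumes "eventually (\<lambda>n. u n \<ge> 0) sequentially"
    and "(\<lambda>n. (sqrt (u n) - 1)^2) \<longlonglongrightarrow> 0"
  shows "u \<longlonglongrightarrow> 1"
proof -
  have "(\<lambda>n. sqrt ((sqrt (u n) - 1)^2)) \<longlonglongrightarrow> sqrt 0"
    by (intro tendsto_real_sqrt assms)
  then have "(\<lambda>n. sqrt (u n) - 1) \<longlonglongrightarrow> 0" by (simp add: tendsto_rabs_zero_iff)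
  then have "(\<lambda>n. (sqrt (u n) - 1) + 1) \<longlonglongrightarrow> 0 + 1" by (intro tendsto_add) auto
  then have "(\<lambda>n. (sqrt (u n))^2) \<longlonglongrightarrow> 1^2" by (intro tendsto_power) simp
  then have "(\<lambda>n. (sqrt (u n))^2) \<longlonglongrightarrow> 1" by simp
  then show ?thesis
    by (rule Lim_transform_eventually) (use assms(1) in \<open>auto elim: eventually_mono\<close>)
qed


lemma c_over_n: "(\<lambda>n. c / real n) \<longlonglongrightarrow> (0::real)"
proof -
  have "(\<lambda>n. c * (1 / real n)) \<longlonglongrightarrow> c * 0" by (intro tendsto_mult tendsto_const lim_inverse_n')
  then show ?thesis by simp
qed

theorem theorem6:
  fixes m M :: real and M1 M2 :: "nat \<Rightarrow> nat"
  assumes "0 \<le> m" and "m < M"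
    and "\<And>n. n > 2 \<Longrightarrow> is_max_point m M n (M1 n) (M2 n)"
  shows "(\<lambda>n. real (M1 n) / real n) \<longlonglongrightarrow> exp (-1 + m / M) * M / (m + M) \<and>
         (\<lambda>n. real (M2 n) / real n) \<longlonglongrightarrow> M / (m + M) \<and>
         (\<lambda>n. E_BWU m M n (M1 n) (M2 n)) \<longlonglongrightarrow> exp (-1 + m / M) * M\<^sup>2 / (m + M)"
proof -
  have M0: "0 < M" using assms by linarith
  define y0 where "y0 = M / (m + M)"
  define x0 where "x0 = exp (-1 + m / M) * (M / (m + M))"
  define V where "V = M * x0"
  define C where "C = 2 * M + m"
  have y0: "0 < y0" "y0 \<le> 1" unfolding y0_def using assms M0 by auto
  have x0: "0 < x0" unfolding x0_def using assms M0 by auto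
  have "m / M < 1" using assms M0 by simp
  then have "exp (-1 + m / M) < 1" by simp
  then have x0y0: "x0 < y0" unfolding x0_def y0_def[symmetric] using y0 by simp
  have Vpos: "V > 0" unfolding V_def using M0 x0 by simp
  have t1: "exp (-1 + m / M) * M / (m + M) = x0" unfolding x0_def by simp
  have t2: "exp (-1 + m / M) * M\<^sup>2 / (m + M) = V" unfolding V_def x0_def by (simp add: power2_eq_square)
  have t3: "M / (m + M) = y0" unfolding y0_def ..
  have FFV: "FF m M x0 y0 = V"
  proof -
    have e: "exp (-1 + m / M) * y0 = x0" "M / (m + M) = y0" unfolding x0_def y0_def by simp_all
    have "M * x0 - FF m M x0 y0 = M * x0 * (y0 / y0 - 1 - ln (y0 / y0)) + M * x0 * (1 - x0 / x0 + (x0 / x0) * ln (x0 / x0))"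
      using ident[OF assms(1) M0 x0 y0(1)] unfolding e(2) unfolding e(1) .
    then show ?thesis unfolding V_def using x0 y0 by simp
  qed
  define rn where "rn n = nat \<lfloor>real n * x0\<rfloor>" for n
  define sn where "sn n = nat \<lfloor>real n * y0\<rfloor> - 1" for n
  have rn_b: "real n * x0 - 1 \<le> real (rn n) \<and> real (rn n) \<le> real n * x0" for n
  proof -
    have "0 \<le> real n * x0" using x0 by simp
    then have "0 \<le> \<lfloor>real n * x0\<rfloor>" by simp
    then have "real (rn n) = real_of_int \<lfloor>real n * x0\<rfloor>" unfolding rn_def by simp
    then show ?thesis by linarith
  qed
  have sn_b: "real n * y0 - 2 \<le> real (sn n) \<and> real (sn n) \<le> real n * y0" for n
  proof -
    have "0 \<le> real n * y0" using y0 by simp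
    then have "0 \<le> \<lfloor>real n * y0\<rfloor>" by simp
    then have e: "real (nat \<lfloor>real n * y0\<rfloor>) = real_of_int \<lfloor>real n * y0\<rfloor>" by simp
    show ?thesis
    proof (cases "nat \<lfloor>real n * y0\<rfloor> = 0")
      case True
      then have "real n * y0 < 1" using e by linarith
      then show ?thesis unfolding sn_def True using \<open>0 \<le> real n * y0\<close> by simp
    next
      case False
      then obtain k where k: "nat \<lfloor>real n * y0\<rfloor> = Suc k" using not0_implies_Suc by blast
      then have "real (sn n) = real (nat \<lfloor>real n * y0\<rfloor>) - 1" unfolding sn_def k by simp
      then show ?thesis using e by linarith
    qed
  qed
  have sn_lt: "sn n < n" if "n > 0" for n
  proof -
    have "real (nat \<lfloor>real n * y0\<rfloor>) \<le> real n"
    proof -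
      have "0 \<le> \<lfloor>real n * y0\<rfloor>" using y0 by simp
      moreover have "real n * y0 \<le> real n" using y0 by (simp add: mult_left_le)
      ultimately show ?thesis by linarith
    qed
    then have "nat \<lfloor>real n * y0\<rfloor> \<le> n" by linarith
    then show ?thesis unfolding sn_def using that by simp
  qed
  obtain N :: nat where N: "real N \<ge> 4 / (y0 - x0) + 4 / y0 + 2 / x0 + 3"
    using real_arch_simple by blast
  have N1: "4 / (y0 - x0) \<ge> 0" "4 / y0 \<ge> 0" "2 / x0 \<ge> 0" using x0 y0 x0y0 by auto
  have good: "2 < n \<and> 1 \<le> rn n \<and> rn n \<le> sn n \<and> 2 \<le> sn n \<and> sn n < n" if "n \<ge> N" for n
  proof -
    have n: "real n \<ge> real N" using that by simp
    have a: "real n \<ge> 4 / (y0 - x0)" "real n \<ge> 4 / y0" "real n \<ge> 2 / x0" "real n \<ge> 3"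
      using n N N1 by linarith+
    have "real n * (y0 - x0) \<ge> 4" using a(1) x0y0 by (simp add: field_simps)
    moreover have "real n * y0 \<ge> 4" using a(2) y0 by (simp add: field_simps)
    moreover have "real n * x0 \<ge> 2" using a(3) x0 by (simp add: field_simps)
    ultimately have "real (rn n) \<ge> 1" "real (sn n) \<ge> 2" "real (rn n) \<le> real (sn n)"
      using rn_b[of n] sn_b[of n] by (auto simp: algebra_simps)
    moreover have "n > 2" using a(4) by simp
    ultimately show ?thesis using sn_lt[of n] by auto
  qed
  then have ev_good: "eventually (\<lambda>n. 2 < n \<and> 1 \<le> rn n \<and> rn n \<le> sn n \<and> 2 \<le> sn n \<and> sn n < n) sequentially"
    using eventually_sequentially by blast
  have rn_lim: "(\<lambda>n. real (rn n) / real n) \<longlonglongrightarrow> x0"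
  proof (rule tendsto_sandwich[of "\<lambda>n. x0 - 1 / real n" _ _ "\<lambda>n. x0"])
    show "eventually (\<lambda>n. x0 - 1 / real n \<le> real (rn n) / real n) sequentially"
      using eventually_gt_at_top[of 0]
    proof eventually_elim
      case (elim n)
      have "(real n * x0 - 1) / real n \<le> real (rn n) / real n"
        by (rule divide_right_mono) (use rn_b[of n] in auto)
      moreover have "(real n * x0 - 1) / real n = x0 - 1 / real n" using elim by (simp add: field_simps)
      ultimately show ?case by simp
    qed
    show "eventually (\<lambda>n. real (rn n) / real n \<le> x0) sequentially"
      using eventually_gt_at_top[of 0]
    proof eventually_elim
      case (elim n)
      then show ?case using rn_b[of n] by (simp add: field_simps)
    qed
    show "(\<lambda>n. x0 - 1 / real n) \<longlonglongrightarrow> x0" using tendsto_diff[OF tendsto_const c_over_n, of x0 1] by simp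
  qed simp
  have sn_lim: "(\<lambda>n. real (sn n) / real n) \<longlonglongrightarrow> y0"
  proof (rule tendsto_sandwich[of "\<lambda>n. y0 - 2 / real n" _ _ "\<lambda>n. y0"])
    show "eventually (\<lambda>n. y0 - 2 / real n \<le> real (sn n) / real n) sequentially"
      using eventually_gt_at_top[of 0]
    proof eventually_elim
      case (elim n)
      have "(real n * y0 - 2) / real n \<le> real (sn n) / real n"
        by (rule divide_right_mono) (use sn_b[of n] in auto)
      moreover have "(real n * y0 - 2) / real n = y0 - 2 / real n" using elim by (simp add: field_simps)
      ultimately show ?case by simp
    qed
    show "eventually (\<lambda>n. real (sn n) / real n \<le> y0) sequentially"
      using eventually_gt_at_top[of 0]
    proof eventually_elim
      case (elim n)
      then show ?case using sn_b[of n] by (simp add: field_simps)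
    qed
    show "(\<lambda>n. y0 - 2 / real n) \<longlonglongrightarrow> y0" using tendsto_diff[OF tendsto_const c_over_n, of y0 2] by simp
  qed simp
  define Fs where "Fs n = FF m M (real (rn n) / real n) (real (sn n) / real n)" for n
  have Fs_lim: "Fs \<longlonglongrightarrow> V"
  proof -
    have "Fs \<longlonglongrightarrow> FF m M x0 y0"
      unfolding Fs_def FF_def
      by (intro tendsto_intros rn_lim sn_lim) (use x0 y0 in auto)
    then show ?thesis using FFV by simp
  qed
  define e where "e n = E_BWU m M n (M1 n) (M2 n)" for n
  define x where "x n = real (M1 n) / real n" for n
  define y where "y n = real (M2 n) / real n" for n
  define D where "D n = V - FF m M (x n) (y n)" for n
  have ev1: "eventually (\<lambda>n. Fs n \<le> e n) sequentially"
    using ev_good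
  proof eventually_elim
    case (elim n)
    have "Fs n \<le> E_BWU m M n (rn n) (sn n)" unfolding Fs_def
      using E_lower[OF assms(1) M0, of "rn n" "sn n" n] elim by auto
    also have "\<dots> \<le> e n" using assms(3)[of n] elim unfolding e_def is_max_point_def by auto
    finally show ?case .
  qed
  have ev2: "eventually (\<lambda>n. Fs n > V / 2) sequentially"
    using Fs_lim Vpos by (intro order_tendstoD) auto
  have ev3: "eventually (\<lambda>n. 2 < n \<and> 1 \<le> M1 n \<and> M1 n \<le> M2 n \<and> M2 n < n) sequentially"
    using ev1 ev2 ev_good
  proof eventually_elim
    case (elim n)
    then have "e n > 0" using Vpos by linarith
    then have "M1 n \<noteq> 0" unfolding e_def by (metis E_zero less_irrefl)
    then show ?case using assms(3)[of n] elim unfolding is_max_point_def by auto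
  qed
  have ev4: "eventually (\<lambda>n. 0 < x n \<and> 0 < y n \<and> x n \<le> 1 \<and> y n \<le> 1 \<and>
      e n \<le> FF m M (x n) (y n) + C / real n \<and>
      M * x n * (sqrt (y n / y0) - 1)^2 \<le> D n \<and> M * x0 * (sqrt (x n / x0) - 1)^2 \<le> D n \<and> 0 \<le> D n)
      sequentially"
    using ev3
  proof eventually_elim
    case (elim n)
    have xp: "0 < x n" "0 < y n" "x n \<le> 1" "y n \<le> 1" unfolding x_def y_def using elim by auto
    have up: "e n \<le> FF m M (x n) (y n) + C / real n"
      unfolding e_def x_def y_def C_def using E_upper[OF assms(1) M0, of "M1 n" "M2 n" n] elim by auto
    have Did: "D n = M * x n * (y n / y0 - 1 - ln (y n / y0)) + M * x0 * (1 - x n / x0 + (x n / x0) * ln (x n / x0))"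
    proof -
      have e: "exp (-1 + m / M) * y0 = x0" "M / (m + M) = y0" unfolding x0_def y0_def by simp_all
      show ?thesis using ident[OF assms(1) M0 xp(1,2)] unfolding e(2) unfolding e(1) D_def V_def .
    qed
    have h: "(sqrt (y n / y0) - 1)^2 \<le> y n / y0 - 1 - ln (y n / y0)"
      using hbound[of "y n / y0"] xp y0 by simp
    have k: "(sqrt (x n / x0) - 1)^2 \<le> 1 - x n / x0 + (x n / x0) * ln (x n / x0)"
      using kbound[of "x n / x0"] xp x0 by (simp add: power2_commute)
    have A: "M * x n * (sqrt (y n / y0) - 1)^2 \<le> M * x n * (y n / y0 - 1 - ln (y n / y0))"
      using h xp M0 by (intro mult_left_mono) auto
    have B: "M * x0 * (sqrt (x n / x0) - 1)^2 \<le> M * x0 * (1 - x n / x0 + (x n / x0) * ln (x n / x0))"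
      using k x0 M0 by (intro mult_left_mono) auto
    have A0: "0 \<le> M * x n * (sqrt (y n / y0) - 1)^2" using xp M0 by simp
    have B0: "0 \<le> M * x0 * (sqrt (x n / x0) - 1)^2" using x0 M0 by simp
    show ?case using xp up Did A B A0 B0 by linarith
  qed
  have Cn: "(\<lambda>n. C / real n) \<longlonglongrightarrow> 0" by (rule c_over_n)
  have D_lim: "D \<longlonglongrightarrow> 0"
  proof (rule tendsto_sandwich[of "\<lambda>_. 0" _ _ "\<lambda>n. V - Fs n + C / real n"])
    show "eventually (\<lambda>n. 0 \<le> D n) sequentially" using ev4 by (auto elim: eventually_mono)
    show "eventually (\<lambda>n. D n \<le> V - Fs n + C / real n) sequentially"
      using ev4 ev1 by eventually_elim (auto simp: D_def)
    have "(\<lambda>n. V - Fs n + C / real n) \<longlonglongrightarrow> V - V + 0"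
      by (intro tendsto_intros Fs_lim Cn)
    then show "(\<lambda>n. V - Fs n + C / real n) \<longlonglongrightarrow> 0" by simp
  qed simp
  have part3: "e \<longlonglongrightarrow> V"
  proof (rule tendsto_sandwich[of Fs _ _ "\<lambda>n. V + C / real n"])
    show "eventually (\<lambda>n. Fs n \<le> e n) sequentially" by (rule ev1)
    show "eventually (\<lambda>n. e n \<le> V + C / real n) sequentially"
      using ev4 by eventually_elim (auto simp: D_def)
    have "(\<lambda>n. V + C / real n) \<longlonglongrightarrow> V + 0" by (intro tendsto_intros Cn)
    then show "(\<lambda>n. V + C / real n) \<longlonglongrightarrow> V" by simp
  qed (rule Fs_lim)
  have part1: "x \<longlonglongrightarrow> x0"
  proof -
    have "(\<lambda>n. (sqrt (x n / x0) - 1)^2) \<longlonglongrightarrow> 0"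
    proof (rule tendsto_sandwich[of "\<lambda>_. 0" _ _ "\<lambda>n. D n / (M * x0)"])
      show "eventually (\<lambda>n. 0 \<le> (sqrt (x n / x0) - 1)^2) sequentially" by simp
      show "eventually (\<lambda>n. (sqrt (x n / x0) - 1)^2 \<le> D n / (M * x0)) sequentially"
        using ev4
      proof eventually_elim
        case (elim n)
        then show ?case using M0 x0 by (simp add: field_simps mult.commute)
      qed
      have "(\<lambda>n. D n / (M * x0)) \<longlonglongrightarrow> 0 / (M * x0)" by (intro tendsto_intros D_lim) (use M0 x0 in auto)
      then show "(\<lambda>n. D n / (M * x0)) \<longlonglongrightarrow> 0" by simp
    qed simp
    then have "(\<lambda>n. x n / x0) \<longlonglongrightarrow> 1"
      by (intro sq_lim) (use ev4 x0 in \<open>auto elim: eventually_mono\<close>)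
    then have "(\<lambda>n. x0 * (x n / x0)) \<longlonglongrightarrow> x0 * 1" by (intro tendsto_intros)
    then show ?thesis using x0 by simp
  qed
  have part2: "y \<longlonglongrightarrow> y0"
  proof -
    have "(\<lambda>n. (sqrt (y n / y0) - 1)^2) \<longlonglongrightarrow> 0"
    proof (rule tendsto_sandwich[of "\<lambda>_. 0" _ _ "\<lambda>n. D n / (M * x n)"])
      show "eventually (\<lambda>n. 0 \<le> (sqrt (y n / y0) - 1)^2) sequentially" by simp
      show "eventually (\<lambda>n. (sqrt (y n / y0) - 1)^2 \<le> D n / (M * x n)) sequentially"
        using ev4
      proof eventually_elim
        case (elim n)
        then show ?case using M0 by (simp add: field_simps mult.commute)
      qed
      have "(\<lambda>n. D n / (M * x n)) \<longlonglongrightarrow> 0 / (M * x0)" by (intro tendsto_intros D_lim part1) (use M0 x0 in auto)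
      then show "(\<lambda>n. D n / (M * x n)) \<longlonglongrightarrow> 0" by simp
    qed simp
    then have "(\<lambda>n. y n / y0) \<longlonglongrightarrow> 1"
      by (intro sq_lim) (use ev4 y0 in \<open>auto elim: eventually_mono\<close>)
    then have "(\<lambda>n. y0 * (y n / y0)) \<longlonglongrightarrow> y0 * 1" by (intro tendsto_intros)
    then show ?thesis using y0 by simp
  qed
  show ?thesis using part1 part2 part3 unfolding t1 t2 t3 x_def y_def e_def by simp
qed


end
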